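(* Let $d\ge 2$ and let $n$ be an integer with $1\le n<d$. Let $\{|\psi_k\rangle\}_{k=1}^{d^2}$ be a complete orthonormal basis of $\mathbb{C}^d\otimes\mathbb{C}^d$ consisting of maximally entangled states. Regard $\mathbb{C}^d\otimes\mathbb{C}^d$ as the subspace of $\mathbb{C}^d\otimes\mathbb{C}^{d+n}$ spanned by $|i\rangle|j\rangle$ with $0\le i,j\le d-1$ (where $\{|j\rangle\}_{j=0}^{d+n-1}$ is an orthonormal basis of $\mathbb{C}^{d+n}$). Then $\{|\psi_k\rangle\}_{k=1}^{d^2}$ is an unextendible maximally entangled basis of $\mathbb{C}^d\otimes\mathbb{C}^{d+n}$.
   Context: In $\mathbb{C}^{d_1}\otimes\mathbb{C}^{d_2}$ with $d_1\le d_2$, a pure state is maximally entangled if it has $d_1$ nonzero Schmidt coefficients, all equal (to $1/\sqrt{d_1}$). An unextendible maximally entangled basis (UMEB) of $\mathbb{C}^{d_1}\otimes\mathbb{C}^{d_2}$ is a set of mutually orthogonal maximally entangled states spanning a proper subspace of $\mathbb{C}^{d_1}\otimes\mathbb{C}^{d_2}$ such that the orthogonal complement of this span contains no maximally entangled state. *)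

theory Defs
  imports Complex_Main
begin

text \<open>An element of C^d1 (x) C^d2 is represented by its coefficient function
  psi i j = coefficient of |i>|j>, with i < d1, j < d2; coefficients outside
  this range are required to vanish.  In particular C^d (x) C^d, embedded into
  C^d (x) C^(d+n) as the span of |i>|j> with i,j < d, is literally a subset.\<close>

type_synonym bistate = "nat \<Rightarrow> nat \<Rightarrow> complex"

definition in_space :: "nat \<Rightarrow> nat \<Rightarrow> bistate \<Rightarrow> bool" where
  "in_space d1 d2 \<psi> \<longleftrightarrow> (\<forall>i j. (d1 \<le> i \<or> d2 \<le> j) \<longrightarrow> \<psi> i j = 0)"

definition space :: "nat \<Rightarrow> nat \<Rightarrow> bistate set" where
  "space d1 d2 = {\<psi>. in_space d1 d2 \<psi>}"

definition ip :: "nat \<Rightarrow> nat \<Rightarrow> bistate \<Rightarrow> bistate \<Rightarrow> complex" where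
  "ip d1 d2 \<phi> \<psi> = (\<Sum>i<d1. \<Sum>j<d2. cnj (\<phi> i j) * \<psi> i j)"

definition orthonormal_fam :: "nat \<Rightarrow> nat \<Rightarrow> (nat \<Rightarrow> nat \<Rightarrow> complex) \<Rightarrow> bool" where
  "orthonormal_fam m r a \<longleftrightarrow>
     (\<forall>k<r. \<forall>l<r. (\<Sum>i<m. cnj (a k i) * a l i) = (if k = l then 1 else 0))"

text \<open>Maximally entangled (d1 \<le> d2): a Schmidt decomposition with d1 nonzero
  Schmidt coefficients, all equal to 1/sqrt d1.\<close>
definition max_ent :: "nat \<Rightarrow> nat \<Rightarrow> bistate \<Rightarrow> bool" where
  "max_ent d1 d2 \<psi> \<longleftrightarrow> d1 \<le> d2 \<and> in_space d1 d2 \<psi> \<and>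
     (\<exists>a b. orthonormal_fam d1 d1 a \<and> orthonormal_fam d2 d1 b \<and>
        (\<forall>i<d1. \<forall>j<d2. \<psi> i j = (\<Sum>k<d1. complex_of_real (1 / sqrt (real d1)) * a k i * b k j)))"

definition span_fam :: "nat \<Rightarrow> (nat \<Rightarrow> bistate) \<Rightarrow> bistate set" where
  "span_fam m \<psi> = {\<phi>. \<exists>c. \<forall>i j. \<phi> i j = (\<Sum>k<m. c k * \<psi> k i j)}"

definition UMEB :: "nat \<Rightarrow> nat \<Rightarrow> nat \<Rightarrow> (nat \<Rightarrow> bistate) \<Rightarrow> bool" where
  "UMEB d1 d2 m \<psi> \<longleftrightarrow>
     (\<forall>k<m. max_ent d1 d2 (\<psi> k)) \<and>
     (\<forall>k<m. \<forall>l<m. k \<noteq> l \<longrightarrow> ip d1 d2 (\<psi> k) (\<psi> l) = 0) \<and>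
     span_fam m \<psi> \<subset> space d1 d2 \<and>
     \<not> (\<exists>\<phi>. \<phi> \<in> space d1 d2 \<and> (\<forall>k<m. ip d1 d2 (\<psi> k) \<phi> = 0) \<and> max_ent d1 d2 \<phi>)"

end

theory Submission
  imports Defs
begin

lemma cnj_mult_self: "cnj z * z = complex_of_real ((cmod z)^2)"
  using complex_norm_square[of z] by (simp add: mult.commute)

lemma bessel:
  assumes on: "orthonormal_fam m r b" and j: "j < m"
  shows "(\<Sum>k<r. (cmod (b k j))^2) \<le> 1"
proof -
  define x where "x = (\<lambda>i::nat. if i = j then (1::complex) else 0)"
  define s where "s = (\<lambda>i. \<Sum>k<r. cnj (b k j) * b k i)"
  define S where "S = (\<Sum>k<r. (cmod (b k j))^2)"
  have S': "(\<Sum>k<r. cnj (b k j) * b k j) = complex_of_real S"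
    unfolding S_def by (simp add: cnj_mult_self)
  have xl: "(\<Sum>i<m. cnj (x i) * f i) = f j" for f
  proof -
    have "(\<Sum>i<m. cnj (x i) * f i) = (\<Sum>i<m. if i = j then f i else 0)"
      by (intro sum.cong refl) (simp add: x_def)
    then show ?thesis using j by simp
  qed
  have xr: "(\<Sum>i<m. f i * x i) = f j" for f
  proof -
    have "(\<Sum>i<m. f i * x i) = (\<Sum>i<m. if i = j then f i else 0)"
      by (intro sum.cong refl) (simp add: x_def)
    then show ?thesis using j by simp
  qed
  have e1: "(\<Sum>i<m. cnj (x i) * x i) = 1" using xl[of x] by (simp add: x_def)
  have e2: "(\<Sum>i<m. cnj (x i) * s i) = complex_of_real S"
    using xl[of s] S' by (simp add: s_def)
  have e3: "(\<Sum>i<m. cnj (s i) * x i) = complex_of_real S"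
  proof -
    have "(\<Sum>i<m. cnj (s i) * x i) = cnj (s j)" using xr[of "\<lambda>i. cnj (s i)"] by simp
    also have "\<dots> = cnj (complex_of_real S)" using S' by (simp add: s_def)
    finally show ?thesis by simp
  qed
  have e4: "(\<Sum>i<m. cnj (s i) * s i) = complex_of_real S"
  proof -
    have "(\<Sum>i<m. cnj (s i) * s i) =
       (\<Sum>i<m. \<Sum>k<r. \<Sum>l<r. (b k j * cnj (b l j)) * (cnj (b k i) * b l i))"
      by (simp add: s_def sum_distrib_left sum_distrib_right mult_ac)
    also have "\<dots> = (\<Sum>k<r. \<Sum>l<r. (b k j * cnj (b l j)) * (\<Sum>i<m. cnj (b k i) * b l i))"
      by (simp add: sum_distrib_left sum.swap[of _ "{..<m}"])
    also have "\<dots> = (\<Sum>k<r. \<Sum>l<r. (b k j * cnj (b l j)) * (if k = l then 1 else 0))"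
      using on unfolding orthonormal_fam_def by (intro sum.cong refl) simp
    also have "\<dots> = (\<Sum>k<r. \<Sum>l<r. if l = k then b k j * cnj (b l j) else 0)"
      by (intro sum.cong refl) simp
    also have "\<dots> = (\<Sum>k<r. cnj (b k j) * b k j)"
      by (simp add: mult.commute)
    finally show ?thesis using S' by simp
  qed
  have "(\<Sum>i<m. cnj (x i - s i) * (x i - s i)) = 1 - complex_of_real S"
    using e1 e2 e3 e4 by (simp add: algebra_simps sum.distrib sum_subtractf)
  moreover have "(\<Sum>i<m. cnj (x i - s i) * (x i - s i)) = complex_of_real (\<Sum>i<m. (cmod (x i - s i))^2)"
    unfolding of_real_sum by (intro sum.cong refl) (rule cnj_mult_self)
  ultimately have "(\<Sum>i<m. (cmod (x i - s i))^2) = 1 - S"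
    by (metis of_real_1 of_real_diff of_real_eq_iff)
  moreover have "0 \<le> (\<Sum>i<m. (cmod (x i - s i))^2)" by (simp add: sum_nonneg)
  ultimately show ?thesis unfolding S_def by linarith
qed

lemma ip_ext:
  assumes "in_space d d \<psi>"
  shows "ip d (d + n) \<psi> \<phi> = ip d d \<psi> \<phi>"
proof -
  have "(\<Sum>j<d + n. cnj (\<psi> i j) * \<phi> i j) = (\<Sum>j<d. cnj (\<psi> i j) * \<phi> i j)" for i
    by (rule sum.mono_neutral_right) (use assms in \<open>auto simp: in_space_def\<close>)
  then show ?thesis unfolding ip_def by simp
qed

lemma in_space_mono: "in_space d d \<psi> \<Longrightarrow> in_space d (d + n) \<psi>"
  by (auto simp: in_space_def)

lemma max_ent_ext:
  assumes "max_ent d d \<psi>"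
  shows "max_ent d (d + n) \<psi>"
proof -
  from assms obtain a b where sp: "in_space d d \<psi>" and oa: "orthonormal_fam d d a"
    and ob: "orthonormal_fam d d b"
    and rep: "\<forall>i<d. \<forall>j<d. \<psi> i j = (\<Sum>k<d. complex_of_real (1 / sqrt (real d)) * a k i * b k j)"
    unfolding max_ent_def by blast
  define b' where "b' = (\<lambda>k j. if j < d then b k j else 0)"
  have ob': "orthonormal_fam (d + n) d b'"
    unfolding orthonormal_fam_def
  proof (intro allI impI)
    fix k l assume "k < d" "l < d"
    have "(\<Sum>i<d + n. cnj (b' k i) * b' l i) = (\<Sum>i<d. cnj (b' k i) * b' l i)"
      by (rule sum.mono_neutral_right) (auto simp: b'_def)
    also have "\<dots> = (\<Sum>i<d. cnj (b k i) * b l i)" by (simp add: b'_def)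
    finally show "(\<Sum>i<d + n. cnj (b' k i) * b' l i) = (if k = l then 1 else 0)"
      using ob \<open>k < d\<close> \<open>l < d\<close> unfolding orthonormal_fam_def by simp
  qed
  have rep': "\<forall>i<d. \<forall>j<d + n. \<psi> i j = (\<Sum>k<d. complex_of_real (1 / sqrt (real d)) * a k i * b' k j)"
  proof (intro allI impI)
    fix i j assume "i < d" "j < d + n"
    show "\<psi> i j = (\<Sum>k<d. complex_of_real (1 / sqrt (real d)) * a k i * b' k j)"
    proof (cases "j < d")
      case True then show ?thesis using rep \<open>i < d\<close> by (simp add: b'_def)
    next
      case False then show ?thesis using sp by (simp add: b'_def in_space_def)
    qed
  qed
  show ?thesis unfolding max_ent_def using in_space_mono[OF sp, of n] oa ob' rep' by auto
qed

theorem proposition2: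
  fixes d n :: nat and \<psi> :: "nat \<Rightarrow> bistate"
  assumes "d \<ge> 2" and "1 \<le> n" and "n < d"
    and "\<forall>k<d^2. max_ent d d (\<psi> k)"
    and "\<forall>k<d^2. \<forall>l<d^2. ip d d (\<psi> k) (\<psi> l) = (if k = l then 1 else 0)"
    and "span_fam (d^2) \<psi> = space d d"
  shows "UMEB d (d + n) (d^2) \<psi>"
proof -
  have sp: "in_space d d (\<psi> k)" if "k < d^2" for k
    using assms(4) that unfolding max_ent_def by blast
  have A: "\<forall>k<d^2. max_ent d (d + n) (\<psi> k)"
    using assms(4) max_ent_ext by blast
  have B: "\<forall>k<d^2. \<forall>l<d^2. k \<noteq> l \<longrightarrow> ip d (d + n) (\<psi> k) (\<psi> l) = 0"
    using assms(5) ip_ext sp by simp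
  have C: "span_fam (d^2) \<psi> \<subset> space d (d + n)"
  proof
    show "span_fam (d^2) \<psi> \<subseteq> space d (d + n)"
      using assms(6) by (auto simp: space_def in_space_def)
    define e :: bistate where "e = (\<lambda>i j. if i = 0 \<and> j = d then 1 else 0)"
    have "e \<in> space d (d + n)" using assms(1,2) by (auto simp: e_def space_def in_space_def)
    moreover have "e \<notin> span_fam (d^2) \<psi>"
      using assms(6) by (auto simp: e_def space_def in_space_def)
    ultimately show "span_fam (d^2) \<psi> \<noteq> space d (d + n)" by blast
  qed
  have D: "\<not> (\<exists>\<phi>. \<phi> \<in> space d (d + n) \<and> (\<forall>k<d^2. ip d (d + n) (\<psi> k) \<phi> = 0) \<and> max_ent d (d + n) \<phi>)"
  proof
    assume "\<exists>\<phi>. \<phi> \<in> space d (d + n) \<and> (\<forall>k<d^2. ip d (d + n) (\<psi> k) \<phi> = 0) \<and> max_ent d (d + n) \<phi>"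
    then obtain \<phi> where orth: "\<forall>k<d^2. ip d (d + n) (\<psi> k) \<phi> = 0"
      and me: "max_ent d (d + n) \<phi>" by blast
    have zero: "\<phi> i0 j0 = 0" if "i0 < d" "j0 < d" for i0 j0
    proof -
      define e :: bistate where "e = (\<lambda>i j. if i = i0 \<and> j = j0 then 1 else 0)"
      have "e \<in> space d d" using that by (auto simp: e_def space_def in_space_def)
      then obtain c where c: "\<And>i j. e i j = (\<Sum>k<d^2. c k * \<psi> k i j)"
        using assms(6) unfolding span_fam_def by blast
      have "ip d (d + n) e \<phi> = \<phi> i0 j0"
      proof -
        have "ip d (d + n) e \<phi> = (\<Sum>i<d. \<Sum>j<d + n. if i = i0 \<and> j = j0 then \<phi> i j else 0)"
          unfolding ip_def by (intro sum.cong refl) (simp add: e_def)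
        also have "\<dots> = (\<Sum>i<d. if i = i0 then \<phi> i j0 else 0)"
          using that by (intro sum.cong refl) auto
        also have "\<dots> = \<phi> i0 j0" using that by simp
        finally show ?thesis .
      qed
      moreover have "ip d (d + n) e \<phi> = (\<Sum>k<d^2. cnj (c k) * ip d (d + n) (\<psi> k) \<phi>)"
      proof -
        have "ip d (d + n) e \<phi> = (\<Sum>i<d. \<Sum>j<d + n. \<Sum>k<d^2. cnj (c k) * (cnj (\<psi> k i j) * \<phi> i j))"
          unfolding ip_def c by (simp add: cnj_sum sum_distrib_right mult.assoc)
        also have "\<dots> = (\<Sum>i<d. \<Sum>k<d^2. \<Sum>j<d + n. cnj (c k) * (cnj (\<psi> k i j) * \<phi> i j))"
          by (rule sum.cong[OF refl], rule sum.swap)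
        also have "\<dots> = (\<Sum>k<d^2. \<Sum>i<d. \<Sum>j<d + n. cnj (c k) * (cnj (\<psi> k i j) * \<phi> i j))"
          by (rule sum.swap)
        also have "\<dots> = (\<Sum>k<d^2. cnj (c k) * ip d (d + n) (\<psi> k) \<phi>)"
          unfolding ip_def sum_distrib_left ..
        finally show ?thesis .
      qed
      ultimately show ?thesis using orth by simp
    qed
    from me obtain a b where oa: "orthonormal_fam d d a" and ob: "orthonormal_fam (d + n) d b"
      and rep: "\<forall>i<d. \<forall>j<d + n. \<phi> i j = (\<Sum>k<d. complex_of_real (1 / sqrt (real d)) * a k i * b k j)"
      unfolding max_ent_def by blast
    define s where "s = complex_of_real (1 / sqrt (real d))"
    have s0: "s \<noteq> 0" using assms(1) by (simp add: s_def)
    have bform: "(\<Sum>i<d. cnj (a k i) * \<phi> i j) = s * b k j" if "k < d" "j < d + n" for k j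
    proof -
      have "(\<Sum>i<d. cnj (a k i) * \<phi> i j) = (\<Sum>i<d. \<Sum>l<d. (s * b l j) * (cnj (a k i) * a l i))"
        using rep that by (intro sum.cong refl) (simp add: s_def sum_distrib_left mult_ac)
      also have "\<dots> = (\<Sum>l<d. \<Sum>i<d. (s * b l j) * (cnj (a k i) * a l i))"
        by (rule sum.swap)
      also have "\<dots> = (\<Sum>l<d. (s * b l j) * (\<Sum>i<d. cnj (a k i) * a l i))"
        by (simp add: sum_distrib_left)
      also have "\<dots> = (\<Sum>l<d. if l = k then s * b l j else 0)"
        using oa that unfolding orthonormal_fam_def by (intro sum.cong refl) auto
      also have "\<dots> = s * b k j" using that by simp
      finally show ?thesis .
    qed
    have bz: "b k j = 0" if "k < d" "j < d" for k j
      using bform[of k j] that zero s0 by simp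
    have norm1: "(\<Sum>j\<in>{d..<d + n}. (cmod (b k j))^2) = 1" if "k < d" for k
    proof -
      have "complex_of_real (\<Sum>j<d + n. (cmod (b k j))^2) = (\<Sum>j<d + n. cnj (b k j) * b k j)"
        unfolding of_real_sum by (intro sum.cong refl) (rule cnj_mult_self[symmetric])
      also have "\<dots> = 1" using ob that unfolding orthonormal_fam_def by simp
      finally have "(\<Sum>j<d + n. (cmod (b k j))^2) = 1" by (metis of_real_eq_1_iff)
      moreover have "(\<Sum>j<d + n. (cmod (b k j))^2) = (\<Sum>j\<in>{d..<d + n}. (cmod (b k j))^2)"
        by (rule sum.mono_neutral_right) (auto simp: bz that)
      ultimately show ?thesis by simp
    qed
    have "real d = (\<Sum>k<d. \<Sum>j\<in>{d..<d + n}. (cmod (b k j))^2)"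
      using norm1 by simp
    also have "\<dots> = (\<Sum>j\<in>{d..<d + n}. \<Sum>k<d. (cmod (b k j))^2)"
      by (rule sum.swap)
    also have "\<dots> \<le> (\<Sum>j\<in>{d..<d + n}. 1)"
      by (intro sum_mono bessel[OF ob]) auto
    also have "\<dots> = real n" by simp
    finally show False using assms(3) by simp
  qed
  show ?thesis unfolding UMEB_def using A B C D
    by (auto simp: space_def)
qed

end
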